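(* Let $M\in K_{Cone}$ and let $\bar g=(g_0,\dots,g_{59})$ be a 60-tuple of automorphisms of $M$ with $\mathrm{Aut}(M)\models A_5(\bar g)$. Then there is at least one point of $M$ fixed by every $g_i$.
   Context: A cycle-free partial order (CFPO) is a partial order in the sense of Warren and Rubin (connected, with no cycles); for $s,t\in M$, $[\![s,t]\!]$ denotes the path from $s$ to $t$. For $x<y$, the upwards cone of $x$ containing $y$ is $\{t: x\notin[\![t,y]\!]\}$; for $z<x$ the downwards cone of $x$ containing $z$ is $\{t: x\notin[\![t,z]\!]\}$. $K_{Cone}$ is the class of path complete CFPOs $M$ that are 1-transitive (Aut$(M)$ is transitive on $M$), cone transitive (for each $x$, any two upwards cones of $x$, and any two downwards cones of $x$, are mapped onto each other by some automorphism), and such that $5\le ro\uparrow(M)\le ro\downarrow(M)$, where $ro\uparrow(M)$ (resp. $ro\downarrow(M)$) is the number of upwards (resp. downwards) cones of any point. Fix an enumeration $a_0,\dots,a_{59}$ of the alternating group $A_5$. For a 60-tuple $\bar f=(f_0,\dots,f_{59})$ of elements of $\mathrm{Aut}(M)$, $A_5(\bar f)$ is the conjunction of all formulas $f_if_j=f_k$ for which $a_ia_j=a_k$ and all formulas $f_if_j\ne f_k$ for which $a_ia_j\neq a_k$ (so $\bar f$ satisfies it iff $a_i\mapsto f_i$ is an injective homomorphism $A_5\to\mathrm{Aut}(M)$). *)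

theory Defs
  imports "HOL-Combinatorics.Permutations"
begin

text \<open>The CFPO M is the whole carrier type 'a with its order.\<close>

definition comparable :: "'a::order \<Rightarrow> 'a \<Rightarrow> bool" where
  "comparable x y \<longleftrightarrow> x \<le> y \<or> y \<le> x"

definition seg :: "'a::order \<Rightarrow> 'a \<Rightarrow> 'a set" where
  "seg x y = {z. (x \<le> z \<and> z \<le> y) \<or> (y \<le> z \<and> z \<le> x)}"

definition interval_connected :: "'a::order set \<Rightarrow> bool" where
  "interval_connected C \<longleftrightarrow>
     (\<forall>a\<in>C. \<forall>b\<in>C. \<exists>xs. xs \<noteq> [] \<and> hd xs = a \<and> last xs = b \<and>
        (\<forall>i. Suc i < length xs \<longrightarrow>
             comparable (xs ! i) (xs ! Suc i) \<and> seg (xs ! i) (xs ! Suc i) \<subseteq> C))"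

definition cfpo_path :: "'a::order \<Rightarrow> 'a \<Rightarrow> 'a set" where
  "cfpo_path s t = \<Inter>{C. s \<in> C \<and> t \<in> C \<and> interval_connected C}"

text \<open>Path complete CFPO: M is connected and every path [[s,t]] is itself a
  connected subset of M (this excludes cycles, and paths passing through
  points of the completion not in M).\<close>
definition path_complete_cfpo :: "'a::order itself \<Rightarrow> bool" where
  "path_complete_cfpo _ \<longleftrightarrow>
     interval_connected (UNIV :: 'a set) \<and>
     (\<forall>s t :: 'a. interval_connected (cfpo_path s t))"

definition up_cone :: "'a::order \<Rightarrow> 'a \<Rightarrow> 'a set" where
  "up_cone x y = {t. x \<notin> cfpo_path t y}"

definition down_cone :: "'a::order \<Rightarrow> 'a \<Rightarrow> 'a set" where
  "down_cone x z = {t. x \<notin> cfpo_path t z}"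

definition up_cones :: "'a::order \<Rightarrow> 'a set set" where
  "up_cones x = {up_cone x y | y. x < y}"

definition down_cones :: "'a::order \<Rightarrow> 'a set set" where
  "down_cones x = {down_cone x z | z. z < x}"

definition automorphism :: "('a::order \<Rightarrow> 'a) \<Rightarrow> bool" where
  "automorphism f \<longleftrightarrow> bij f \<and> (\<forall>x y. x \<le> y \<longleftrightarrow> f x \<le> f y)"

definition one_transitive :: "'a::order itself \<Rightarrow> bool" where
  "one_transitive _ \<longleftrightarrow> (\<forall>x y :: 'a. \<exists>f. automorphism f \<and> f x = y)"

definition cone_transitive :: "'a::order itself \<Rightarrow> bool" where
  "cone_transitive _ \<longleftrightarrow>
     (\<forall>x :: 'a.
        (\<forall>C\<in>up_cones x. \<forall>D\<in>up_cones x. \<exists>f. automorphism f \<and> f ` C = D) \<and>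
        (\<forall>C\<in>down_cones x. \<forall>D\<in>down_cones x. \<exists>f. automorphism f \<and> f ` C = D))"

text \<open>Cardinal comparisons via injections: 5 \<le> ro_up(M) \<le> ro_down(M).\<close>
definition ramification_cond :: "'a::order itself \<Rightarrow> bool" where
  "ramification_cond _ \<longleftrightarrow>
     (\<forall>x :: 'a.
        (\<exists>h :: nat \<Rightarrow> 'a set. inj_on h {..<5} \<and> h ` {..<5} \<subseteq> up_cones x) \<and>
        (\<exists>h. inj_on h (up_cones x) \<and> h ` up_cones x \<subseteq> down_cones x))"

definition K_Cone :: "'a::order itself \<Rightarrow> bool" where
  "K_Cone T \<longleftrightarrow> path_complete_cfpo T \<and> one_transitive T \<and> cone_transitive T
                \<and> ramification_cond T"

definition A5 :: "(nat \<Rightarrow> nat) set" where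
  "A5 = {p. p permutes {..<5} \<and> evenperm p}"

text \<open>A5(f) with respect to the enumeration a_0..a_59 of A5.\<close>
definition A5_formula :: "(nat \<Rightarrow> nat \<Rightarrow> nat) \<Rightarrow> (nat \<Rightarrow> 'b \<Rightarrow> 'b) \<Rightarrow> bool" where
  "A5_formula a f \<longleftrightarrow>
     (\<forall>i<60. \<forall>j<60. \<forall>k<60. (f i \<circ> f j = f k \<longleftrightarrow> a i \<circ> a j = a k))"

end

theory Submission
  imports Defs
begin

definition stepE :: "'a::order set \<Rightarrow> 'a \<Rightarrow> 'a \<Rightarrow> bool" where
  "stepE C x y \<longleftrightarrow> comparable x y \<and> seg x y \<subseteq> C"

lemma seg_sym: "seg x y = seg y x" unfolding seg_def by auto
lemma comparable_sym: "comparable x y = comparable y x" unfolding comparable_def by auto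
lemma seg_self: "seg x x = {x}" unfolding seg_def by auto

lemma stepE_sym: "stepE C x y \<Longrightarrow> stepE C y x"
  unfolding stepE_def using seg_sym comparable_sym by metis

lemma stepE_in: "stepE C x y \<Longrightarrow> comparable x y \<Longrightarrow> x \<in> C \<and> y \<in> C"
  unfolding stepE_def seg_def comparable_def by auto

lemma stepE_in2: "stepE C x y \<Longrightarrow> x \<in> C \<and> y \<in> C"
  unfolding stepE_def seg_def comparable_def by auto

lemma stepE_mono: "stepE C x y \<Longrightarrow> C \<subseteq> D \<Longrightarrow> stepE D x y"
  unfolding stepE_def by auto

lemma rt_mono: "(stepE C)\<^sup>*\<^sup>* x y \<Longrightarrow> C \<subseteq> D \<Longrightarrow> (stepE D)\<^sup>*\<^sup>* x y"
  by (induction rule: rtranclp_induct) (auto intro: stepE_mono rtranclp.rtrancl_into_rtrancl)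

lemma rt_sym: "(stepE C)\<^sup>*\<^sup>* x y \<Longrightarrow> (stepE C)\<^sup>*\<^sup>* y x"
  by (induction rule: rtranclp_induct) (auto intro: stepE_sym converse_rtranclp_into_rtranclp)

lemma rt_in: "(stepE C)\<^sup>*\<^sup>* x y \<Longrightarrow> x \<in> C \<Longrightarrow> y \<in> C"
  by (induction rule: rtranclp_induct) (auto dest: stepE_in2)

lemma list_rt: "xs \<noteq> [] \<Longrightarrow> (\<forall>i. Suc i < length xs \<longrightarrow> comparable (xs ! i) (xs ! Suc i) \<and> seg (xs ! i) (xs ! Suc i) \<subseteq> C)
   \<Longrightarrow> (stepE C)\<^sup>*\<^sup>* (hd xs) (last xs)"
proof (induction xs)
  case Nil then show ?case by simp
next
  case (Cons x xs)
  show ?case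
  proof (cases "xs = []")
    case True then show ?thesis by simp
  next
    case False
    have s: "stepE C x (hd xs)" using Cons.prems(2)[rule_format, of 0] False
      by (auto simp: stepE_def hd_conv_nth)
    have "(stepE C)\<^sup>*\<^sup>* (hd xs) (last xs)"
      apply (rule Cons.IH[OF False])
      using Cons.prems(2) by (metis Suc_less_eq length_Cons nth_Cons_Suc)
    then show ?thesis using s False by (auto intro: converse_rtranclp_into_rtranclp)
  qed
qed

lemma rt_list: "(stepE C)\<^sup>*\<^sup>* a b \<Longrightarrow> \<exists>xs. xs \<noteq> [] \<and> hd xs = a \<and> last xs = b \<and>
   (\<forall>i. Suc i < length xs \<longrightarrow> comparable (xs ! i) (xs ! Suc i) \<and> seg (xs ! i) (xs ! Suc i) \<subseteq> C)"
proof (induction rule: converse_rtranclp_induct)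
  case base
  then show ?case by (intro exI[of _ "[b]"]) auto
next
  case (step y z)
  then obtain xs where xs: "xs \<noteq> []" "hd xs = z" "last xs = b"
     "\<forall>i. Suc i < length xs \<longrightarrow> comparable (xs ! i) (xs ! Suc i) \<and> seg (xs ! i) (xs ! Suc i) \<subseteq> C" by blast
  show ?case
  proof (intro exI[of _ "y # xs"] conjI allI impI)
    fix i assume i: "Suc i < length (y # xs)"
    show "comparable ((y # xs) ! i) ((y # xs) ! Suc i)" "seg ((y # xs) ! i) ((y # xs) ! Suc i) \<subseteq> C"
    proof -
      have "comparable ((y # xs) ! i) ((y # xs) ! Suc i) \<and> seg ((y # xs) ! i) ((y # xs) ! Suc i) \<subseteq> C"
      proof (cases i)
        case 0 then show ?thesis using step(1) xs by (auto simp: stepE_def hd_conv_nth)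
      next
        case (Suc j) then show ?thesis using xs(4) i by auto
      qed
      then show "comparable ((y # xs) ! i) ((y # xs) ! Suc i)" "seg ((y # xs) ! i) ((y # xs) ! Suc i) \<subseteq> C" by auto
    qed
  qed (use xs in auto)
qed

lemma ic_iff: "interval_connected C \<longleftrightarrow> (\<forall>a\<in>C. \<forall>b\<in>C. (stepE C)\<^sup>*\<^sup>* a b)"
  unfolding interval_connected_def
  by (metis list_rt rt_list)


lemma path_least: "s \<in> C \<Longrightarrow> t \<in> C \<Longrightarrow> interval_connected C \<Longrightarrow> cfpo_path s t \<subseteq> C"
  unfolding cfpo_path_def by auto

lemma path_mem1: "s \<in> cfpo_path s t" and path_mem2: "t \<in> cfpo_path s t"
  unfolding cfpo_path_def by auto

lemma path_sym: "cfpo_path s t = cfpo_path t s"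
  unfolding cfpo_path_def by auto

lemma seg_ic: "comparable x y \<Longrightarrow> interval_connected (seg x y)"
  unfolding ic_iff
proof (intro ballI)
  fix a b assume c: "comparable x y" and a: "a \<in> seg x y" and b: "b \<in> seg x y"
  have "stepE (seg x y) x z" if "z \<in> seg x y" for z
    using c that unfolding stepE_def seg_def comparable_def by auto
  then show "(stepE (seg x y))\<^sup>*\<^sup>* a b" using a b
    by (meson r_into_rtranclp rt_sym rtranclp_trans)
qed

lemma single_ic: "interval_connected {a}"
  using seg_ic[of a a] by (simp add: seg_self comparable_def)

lemma path_self: "cfpo_path a a = {a}"
  using path_least[of a "{a}" a] single_ic path_mem1[of a a] by auto

lemma path_le_seg: "comparable s t \<Longrightarrow> cfpo_path s t \<subseteq> seg s t"
  by (rule path_least) (auto simp: seg_def comparable_def intro: seg_ic[unfolded seg_def comparable_def])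

lemma union_ic: "interval_connected A \<Longrightarrow> interval_connected B \<Longrightarrow> p \<in> A \<Longrightarrow> p \<in> B
  \<Longrightarrow> interval_connected (A \<union> B)"
  unfolding ic_iff
proof (intro ballI)
  fix a b assume A: "\<forall>a\<in>A. \<forall>b\<in>A. (stepE A)\<^sup>*\<^sup>* a b" and B: "\<forall>a\<in>B. \<forall>b\<in>B. (stepE B)\<^sup>*\<^sup>* a b"
    and p: "p \<in> A" "p \<in> B" and a: "a \<in> A \<union> B" and b: "b \<in> A \<union> B"
  have "(stepE (A \<union> B))\<^sup>*\<^sup>* z p" if "z \<in> A \<union> B" for z
    using that A B p by (meson Un_iff rt_mono sup.cobounded1 sup.cobounded2)
  then show "(stepE (A \<union> B))\<^sup>*\<^sup>* a b" using a b by (meson rt_sym rtranclp_trans)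
qed

locale cfpo =
  fixes T :: "'a::order itself"
  assumes pc: "\<And>s t :: 'a. interval_connected (cfpo_path s t)"
begin

lemma path_tri: "cfpo_path a c \<subseteq> cfpo_path a b \<union> cfpo_path b (c::'a)"
  by (rule path_least) (auto intro: union_ic pc path_mem1 path_mem2)

lemma convex: "x \<in> cfpo_path a b \<Longrightarrow> y \<in> cfpo_path a b \<Longrightarrow> cfpo_path x y \<subseteq> cfpo_path a (b::'a)"
  by (rule path_least) (auto intro: pc)


lemma seg_memr: "y \<in> seg x (y::'b::order) \<longleftrightarrow> comparable x y"
  unfolding seg_def comparable_def by auto

lemma seg_sub: "r \<in> seg p q \<Longrightarrow> comparable p r \<and> seg p r \<subseteq> seg p (q::'b::order)"
  unfolding seg_def comparable_def by (auto intro: order_trans)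

lemma seg_excl: "s \<in> seg q x \<Longrightarrow> s \<noteq> x \<Longrightarrow> x \<notin> seg q (s::'b::order)"
  unfolding seg_def by (auto dest: order_antisym)

lemma endpoint:
  assumes ax: "a \<noteq> x"
  shows "interval_connected (cfpo_path a x - {x}) \<and> (\<exists>z \<in> cfpo_path a x - {x}. comparable z (x::'a))"
proof -
  define Q where "Q = cfpo_path a x"
  define Q' where "Q' = Q - {x}"
  define A where "A = {p \<in> Q'. (stepE Q')\<^sup>*\<^sup>* a p}"
  have aQ': "a \<in> Q'" using ax path_mem1 unfolding Q'_def Q_def by auto
  have aA: "a \<in> A" using aQ' unfolding A_def by auto
  have clos: "seg p q \<subseteq> A" if "p \<in> A" "stepE Q' p q" for p q
  proof
    fix r assume r: "r \<in> seg p q"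
    have "stepE Q' p r" using seg_sub[OF r] that(2) unfolding stepE_def by auto
    then show "r \<in> A" using that r unfolding A_def stepE_def
      by (auto intro: rtranclp.rtrancl_into_rtrancl)
  qed
  have reachA: "p \<in> A \<and> (stepE A)\<^sup>*\<^sup>* a p" if "(stepE Q')\<^sup>*\<^sup>* a p" for p
    using that
  proof (induction rule: rtranclp_induct)
    case base then show ?case using aA by auto
  next
    case (step u v)
    then have "seg u v \<subseteq> A" using clos by auto
    then have "stepE A u v" using step(2) unfolding stepE_def by auto
    then show ?case using step stepE_in2 by (auto intro: rtranclp.rtrancl_into_rtrancl)
  qed
  have claim: "q \<in> A \<or> (\<exists>p\<in>A. stepE (A \<union> {x}) p x)" if "(stepE Q)\<^sup>*\<^sup>* a q" for q
    using that
  proof (induction rule: rtranclp_induct)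
    case base then show ?case using aA by auto
  next
    case (step q r)
    show ?case
    proof (cases "\<exists>p\<in>A. stepE (A \<union> {x}) p x")
      case True then show ?thesis by auto
    next
      case False
      then have qA: "q \<in> A" using step by auto
      show ?thesis
      proof (cases "x \<in> seg q r")
        case False
        then have "stepE Q' q r" using step(2) unfolding stepE_def Q'_def by auto
        then have "r \<in> A" using clos[OF qA] seg_memr unfolding stepE_def by blast
        then show ?thesis by auto
      next
        case True
        have cx: "comparable q x" and sx: "seg q x \<subseteq> seg q r" using seg_sub[OF True] by auto
        have "seg q x \<subseteq> A \<union> {x}"
        proof
          fix s assume s: "s \<in> seg q x"
          show "s \<in> A \<union> {x}"
          proof (cases "s = x")
            case False
            have "stepE Q' q s"
              using seg_sub[OF s] seg_excl[OF s False] sx step(2) unfolding stepE_def Q'_def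
              by blast
            then have "seg q s \<subseteq> A" using clos[OF qA] by auto
            then show ?thesis using s by (auto simp: seg_def)
          qed auto
        qed
        then have "stepE (A \<union> {x}) q x" using cx unfolding stepE_def by auto
        then show ?thesis using qA by auto
      qed
    qed
  qed
  have xQ: "x \<in> Q" unfolding Q_def by (rule path_mem2)
  have "(stepE Q)\<^sup>*\<^sup>* a x" using pc[of a x] aQ' xQ unfolding ic_iff Q_def Q'_def by auto
  moreover have "x \<notin> A" unfolding A_def Q'_def by auto
  ultimately obtain p where pA: "p \<in> A" and px: "stepE (A \<union> {x}) p x" using claim by blast
  have AA: "(stepE A)\<^sup>*\<^sup>* a p" if "p \<in> A" for p using reachA that unfolding A_def by auto
  have icA: "interval_connected (A \<union> {x})"
    unfolding ic_iff
  proof (intro ballI)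
    have r: "(stepE (A \<union> {x}))\<^sup>*\<^sup>* a z" if "z \<in> A \<union> {x}" for z
    proof (cases "z = x")
      case True
      have "(stepE (A \<union> {x}))\<^sup>*\<^sup>* a p" using AA[OF pA] rt_mono by blast
      then show ?thesis using px True by (auto intro: rtranclp.rtrancl_into_rtrancl)
    next
      case False then show ?thesis using that AA rt_mono by blast
    qed
    fix u v assume "u \<in> A \<union> {x}" "v \<in> A \<union> {x}"
    then show "(stepE (A \<union> {x}))\<^sup>*\<^sup>* u v" using r by (meson rt_sym rtranclp_trans)
  qed
  have "Q \<subseteq> A \<union> {x}" unfolding Q_def by (rule path_least) (use aA icA in auto)
  then have QA: "Q' = A" unfolding Q'_def A_def by auto
  have "interval_connected Q'"
    unfolding ic_iff QA using AA by (meson rt_sym rtranclp_trans)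
  moreover have "p \<in> Q'" "comparable p x" using pA QA px unfolding stepE_def by auto
  ultimately show ?thesis unfolding Q'_def Q_def by auto
qed

lemma mutual: "x \<in> cfpo_path a y \<Longrightarrow> y \<in> cfpo_path a x \<Longrightarrow> x = (y::'a)"
proof (rule ccontr)
  assume x: "x \<in> cfpo_path a y" and y: "y \<in> cfpo_path a x" and ne: "x \<noteq> y"
  have ax: "a \<noteq> x" using y ne path_self by (metis singletonD)
  have "cfpo_path a y \<subseteq> cfpo_path a x - {x}"
    by (rule path_least) (use endpoint[OF ax] ax y ne path_mem1 in auto)
  then show False using x by auto
qed

lemma chain_seg:
  assumes st: "s \<le> t" and u: "u \<in> seg s t" and v: "v \<in> seg s t"
  shows "comparable u (v::'a)"
proof (rule ccontr)
  assume nc: "\<not> comparable u v"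
  have su: "s \<le> u" "u \<le> t" "s \<le> v" "v \<le> t" using st u v unfolding seg_def by auto
  have i1: "interval_connected (seg u s \<union> seg s v)"
    by (rule union_ic[of _ _ s]) (auto intro!: seg_ic[unfolded seg_def comparable_def] simp: comparable_def su seg_def)
  have i2: "interval_connected (seg u t \<union> seg t v)"
    by (rule union_ic[of _ _ t]) (auto intro!: seg_ic[unfolded seg_def comparable_def] simp: comparable_def su seg_def)
  have "cfpo_path u v \<subseteq> seg u s \<union> seg s v"
    by (rule path_least) (use i1 in \<open>auto simp: seg_def su\<close>)
  moreover have "cfpo_path u v \<subseteq> seg u t \<union> seg t v"
    by (rule path_least) (use i2 in \<open>auto simp: seg_def su\<close>)
  ultimately have sub: "cfpo_path u v \<subseteq> {u, v}"
  proof (intro subsetI)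
    fix x assume h1: "cfpo_path u v \<subseteq> seg u s \<union> seg s v" and h2: "cfpo_path u v \<subseteq> seg u t \<union> seg t v"
      and x: "x \<in> cfpo_path u v"
    have a1: "x \<le> u \<or> x \<le> v" using h1 x su unfolding seg_def by (auto intro: order_trans)
    have a2: "u \<le> x \<or> v \<le> x" using h2 x su unfolding seg_def by (auto intro: order_trans)
    show "x \<in> {u, v}" using a1 a2 nc unfolding comparable_def by (auto intro: order_trans order_antisym)
  qed
  have "(stepE (cfpo_path u v))\<^sup>*\<^sup>* u v" using pc[of u v] unfolding ic_iff by (meson path_mem1 path_mem2)
  moreover have "w = u" if "(stepE (cfpo_path u v))\<^sup>*\<^sup>* u w" for w
    using that
  proof (induction rule: rtranclp_induct)
    case (step w w')
    then have "w' \<in> {u, v}" "comparable u w'" using sub stepE_in2[OF step(2)] unfolding stepE_def by auto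
    then show ?case using nc by (auto simp: comparable_def)
  qed auto
  ultimately have "v = u" by auto
  then show False using nc by (auto simp: comparable_def)
qed

lemma path_seg:
  assumes st: "s \<le> t" shows "cfpo_path s t = seg s (t::'a)"
proof
  show "cfpo_path s t \<subseteq> seg s t" using path_le_seg st by (auto simp: comparable_def)
  show "seg s t \<subseteq> cfpo_path s t"
  proof
    fix m assume m: "m \<in> seg s t"
    show "m \<in> cfpo_path s t"
    proof (rule ccontr)
      assume nm: "m \<notin> cfpo_path s t"
      define Q where "Q = cfpo_path s t"
      have sQ: "Q \<subseteq> seg s t" using path_le_seg st unfolding Q_def by (auto simp: comparable_def)
      have sm: "s < m" using m nm path_mem1[of s t] st unfolding seg_def by (auto simp: order.order_iff_strict)
      have "q < m" if "(stepE Q)\<^sup>*\<^sup>* s q" for q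
        using that
      proof (induction rule: rtranclp_induct)
        case base then show ?case using sm by simp
      next
        case (step q r)
        have rQ: "r \<in> Q" using stepE_in2[OF step(2)] by auto
        have "comparable m r" using chain_seg[OF st m] rQ sQ by auto
        moreover have "\<not> m \<le> r"
        proof
          assume "m \<le> r"
          then have "m \<in> seg q r" using step(3) by (auto simp: seg_def)
          then show False using step(2) nm unfolding stepE_def Q_def by auto
        qed
        ultimately show ?case by (auto simp: comparable_def)
      qed
      moreover have "(stepE Q)\<^sup>*\<^sup>* s t" using pc[of s t] unfolding ic_iff Q_def by (meson path_mem1 path_mem2)
      ultimately have "t < m" by auto
      then show False using m st unfolding seg_def by auto
    qed
  qed
qed


end

lemma aut_le: "automorphism f \<Longrightarrow> (f x \<le> f y) = (x \<le> y)"
  unfolding automorphism_def by auto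

lemma aut_less: "automorphism f \<Longrightarrow> (f x < f y) = (x < y)"
  using aut_le[of f] by (simp add: less_le_not_le)

lemma aut_inj: "automorphism f \<Longrightarrow> f x = f y \<longleftrightarrow> x = y"
  using aut_le[of f] by (metis order_antisym order_refl)

lemma aut_surj: "automorphism f \<Longrightarrow> \<exists>x. y = f x"
  unfolding automorphism_def bij_def surj_def by auto

lemma aut_seg: "automorphism f \<Longrightarrow> (f z \<in> seg (f x) (f y)) = (z \<in> seg x y)"
  unfolding seg_def using aut_le[of f] by auto

lemma aut_comparable: "automorphism f \<Longrightarrow> comparable (f x) (f y) = comparable x y"
  unfolding comparable_def using aut_le[of f] by auto

lemma aut_stepE: assumes f: "automorphism f" shows "stepE (f ` C) (f x) (f y) = stepE C x y"
proof -
  have "seg (f x) (f y) \<subseteq> f ` C \<longleftrightarrow> seg x y \<subseteq> C"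
  proof
    assume h: "seg (f x) (f y) \<subseteq> f ` C"
    show "seg x y \<subseteq> C"
    proof
      fix z assume "z \<in> seg x y"
      then have "f z \<in> f ` C" using h aut_seg[OF f] by blast
      then show "z \<in> C" using aut_inj[OF f] by auto
    qed
  next
    assume h: "seg x y \<subseteq> C"
    show "seg (f x) (f y) \<subseteq> f ` C"
    proof
      fix z assume z: "z \<in> seg (f x) (f y)"
      obtain z0 where "z = f z0" using aut_surj[OF f] by blast
      then show "z \<in> f ` C" using z h aut_seg[OF f] by blast
    qed
  qed
  then show ?thesis unfolding stepE_def using aut_comparable[OF f] by simp
qed

lemma aut_rt: assumes f: "automorphism f"
  shows "(stepE (f ` C))\<^sup>*\<^sup>* (f x) (f y) = (stepE C)\<^sup>*\<^sup>* x y"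
proof
  assume "(stepE C)\<^sup>*\<^sup>* x y"
  then show "(stepE (f ` C))\<^sup>*\<^sup>* (f x) (f y)"
    by (induction rule: rtranclp_induct) (auto simp: aut_stepE[OF f] intro: rtranclp.rtrancl_into_rtrancl)
next
  assume h: "(stepE (f ` C))\<^sup>*\<^sup>* (f x) (f y)"
  have "\<And>b. (stepE (f ` C))\<^sup>*\<^sup>* a b \<Longrightarrow> \<forall>x. a = f x \<longrightarrow> (\<forall>y. b = f y \<longrightarrow> (stepE C)\<^sup>*\<^sup>* x y)" for a
  proof -
    fix b assume "(stepE (f ` C))\<^sup>*\<^sup>* a b"
    then show "\<forall>x. a = f x \<longrightarrow> (\<forall>y. b = f y \<longrightarrow> (stepE C)\<^sup>*\<^sup>* x y)"
    proof (induction rule: rtranclp_induct)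
      case base then show ?case using aut_inj[OF f] by auto
    next
      case (step u v)
      show ?case
      proof (intro allI impI)
        fix x y assume ax: "a = f x" and vy: "v = f y"
        obtain u0 where u0: "u = f u0" using aut_surj[OF f] by blast
        have "(stepE C)\<^sup>*\<^sup>* x u0" using step(3) ax u0 by auto
        moreover have "stepE C u0 y" using step(2) u0 vy aut_stepE[OF f] by auto
        ultimately show "(stepE C)\<^sup>*\<^sup>* x y" by (auto intro: rtranclp.rtrancl_into_rtrancl)
      qed
    qed
  qed
  then show "(stepE C)\<^sup>*\<^sup>* x y" using h by auto
qed

lemma aut_ic: assumes f: "automorphism f" shows "interval_connected (f ` C) = interval_connected C"
  unfolding ic_iff using aut_rt[OF f] by auto

lemma aut_ic_pre: assumes f: "automorphism f" and C: "interval_connected C"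
  shows "interval_connected (f -` C)"
proof -
  have "f ` (f -` C) = C" using aut_surj[OF f] by auto
  then show ?thesis using aut_ic[OF f, of "f -` C"] C by simp
qed

context cfpo begin

lemma path_image: assumes f: "automorphism f"
  shows "f ` cfpo_path a b = cfpo_path (f a) (f (b::'a))"
proof
  show "cfpo_path (f a) (f b) \<subseteq> f ` cfpo_path a b"
    by (rule path_least) (auto simp: aut_ic[OF f] pc intro: path_mem1 path_mem2)
  show "f ` cfpo_path a b \<subseteq> cfpo_path (f a) (f b)"
  proof
    fix z assume "z \<in> f ` cfpo_path a b"
    then obtain z0 where z0: "z = f z0" "z0 \<in> cfpo_path a b" by auto
    have "z0 \<in> f -` cfpo_path (f a) (f b)"
      using z0(2) path_least[of a "f -` cfpo_path (f a) (f b)" b] aut_ic_pre[OF f pc]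
        path_mem1 path_mem2 by blast
    then show "z \<in> cfpo_path (f a) (f b)" using z0 by auto
  qed
qed

lemma path_mem_aut: "automorphism f \<Longrightarrow> (f z \<in> cfpo_path (f a) (f (b::'a))) = (z \<in> cfpo_path a b)"
  using path_image[of f a b] aut_inj[of f] by (metis image_iff)

end

definition extremal :: "'b::order set \<Rightarrow> 'b \<Rightarrow> bool" where
  "extremal Q u \<longleftrightarrow> u \<in> Q \<and> ((\<forall>w\<in>Q. \<not> u < w) \<or> (\<forall>w\<in>Q. \<not> w < u))"

lemma rt_fin:
  assumes "(stepE Q)\<^sup>*\<^sup>* a b"
  shows "\<exists>X. finite X \<and> a \<in> X \<and> b \<in> X \<and>
     (\<forall>x\<in>X. (\<lambda>u v. u \<in> X \<and> v \<in> X \<and> stepE Q u v)\<^sup>*\<^sup>* a x)"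
  using assms
proof (induction rule: rtranclp_induct)
  case base
  have "(\<lambda>u v. u \<in> {a} \<and> v \<in> {a} \<and> stepE Q u v)\<^sup>*\<^sup>* a a" by simp
  then show ?case by (intro exI[of _ "{a}"]) simp
next
  case (step b c)
  then obtain X where X: "finite X" "a \<in> X" "b \<in> X"
    "\<forall>x\<in>X. (\<lambda>u v. u \<in> X \<and> v \<in> X \<and> stepE Q u v)\<^sup>*\<^sup>* a x" by blast
  define R where "R = (\<lambda>u v. u \<in> insert c X \<and> v \<in> insert c X \<and> stepE Q u v)"
  have m: "R\<^sup>*\<^sup>* a x" if "x \<in> X" for x
  proof -
    have "(\<lambda>u v. u \<in> X \<and> v \<in> X \<and> stepE Q u v)\<^sup>*\<^sup>* a x" using X(4) that by blast
    then show ?thesis by (rule rtranclp_mono[THEN predicate2D, rotated]) (auto simp: R_def)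
  qed
  have "R b c" using step(2) X(3) unfolding R_def by simp
  then have "R\<^sup>*\<^sup>* a c" using m[OF X(3)] by (rule rtranclp.rtrancl_into_rtrancl[rotated])
  then have "\<forall>x\<in>insert c X. R\<^sup>*\<^sup>* a x" using m by blast
  then show ?case using X unfolding R_def by (intro exI[of _ "insert c X"]) simp
qed

context cfpo begin

lemma path_rep: "\<exists>X. finite X \<and> X \<subseteq> cfpo_path a (b::'a) \<and> a \<in> X \<and> b \<in> X \<and>
   (\<forall>x\<in>X. (\<lambda>u v. u \<in> X \<and> v \<in> X \<and> stepE (cfpo_path a b) u v)\<^sup>*\<^sup>* a x) \<and>
   (\<forall>q\<in>cfpo_path a b. \<exists>x\<in>X. \<exists>y\<in>X. comparable x y \<and> q \<in> seg x y)"
proof -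
  define Q where "Q = cfpo_path a b"
  have "(stepE Q)\<^sup>*\<^sup>* a b" using pc[of a b] unfolding ic_iff Q_def by (meson path_mem1 path_mem2)
  from rt_fin[OF this] obtain X where X0: "finite X \<and> a \<in> X \<and> b \<in> X \<and>
     (\<forall>x\<in>X. (\<lambda>u v. u \<in> X \<and> v \<in> X \<and> stepE Q u v)\<^sup>*\<^sup>* a x)" by (rule exE)
  then have X: "finite X" "a \<in> X" "b \<in> X"
     "\<forall>x\<in>X. (\<lambda>u v. u \<in> X \<and> v \<in> X \<and> stepE Q u v)\<^sup>*\<^sup>* a x" by simp_all
  have XQ: "X \<subseteq> Q"
  proof
    fix x assume "x \<in> X"
    then have "(\<lambda>u v. u \<in> X \<and> v \<in> X \<and> stepE Q u v)\<^sup>*\<^sup>* a x" using X(4) by blast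
    then have "(stepE Q)\<^sup>*\<^sup>* a x" by (rule rtranclp_mono[THEN predicate2D, rotated]) auto
    then show "x \<in> Q" using rt_in path_mem1 unfolding Q_def by metis
  qed
  define D where "D = {q. \<exists>x\<in>X. \<exists>y\<in>X. comparable x y \<and> seg x y \<subseteq> Q \<and> q \<in> seg x y}"
  have DQ: "D \<subseteq> Q" unfolding D_def by auto
  have XD: "stepE D u v" if "u \<in> X" "v \<in> X" "stepE Q u v" for u v
    using that unfolding stepE_def D_def by blast
  have reachX: "(stepE D)\<^sup>*\<^sup>* a x" if "x \<in> X" for x
  proof -
    have "(\<lambda>u v. u \<in> X \<and> v \<in> X \<and> stepE Q u v)\<^sup>*\<^sup>* a x" using X(4) that by auto
    then show ?thesis by (rule rtranclp_mono[THEN predicate2D, rotated]) (use XD in auto)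
  qed
  have reachD: "(stepE D)\<^sup>*\<^sup>* a q" if qD: "q \<in> D" for q
  proof -
    obtain x y where xy: "x \<in> X" "y \<in> X" "comparable x y" "seg x y \<subseteq> Q" "q \<in> seg x y"
      using qD unfolding D_def by auto
    have "seg x q \<subseteq> D" using seg_sub[OF xy(5)] xy unfolding D_def by blast
    then have "stepE D x q" using seg_sub[OF xy(5)] unfolding stepE_def by auto
    then show ?thesis using reachX[OF xy(1)] by (auto intro: rtranclp.rtrancl_into_rtrancl)
  qed
  have icD: "interval_connected D" unfolding ic_iff using reachD by (meson rt_sym rtranclp_trans)
  have "a \<in> D"
  proof -
    have "comparable a a \<and> seg a a \<subseteq> Q \<and> a \<in> seg a a" using X XQ by (auto simp: comparable_def seg_self)
    then show ?thesis unfolding D_def using X(2) by blast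
  qed
  have "b \<in> D"
  proof -
    have "comparable b b \<and> seg b b \<subseteq> Q \<and> b \<in> seg b b" using X XQ by (auto simp: comparable_def seg_self)
    then show ?thesis unfolding D_def using X(3) by blast
  qed
  have "Q \<subseteq> D" unfolding Q_def using \<open>a \<in> D\<close> \<open>b \<in> D\<close> icD by (rule path_least)
  have cov: "\<forall>q\<in>cfpo_path a b. \<exists>x\<in>X. \<exists>y\<in>X. comparable x y \<and> q \<in> seg x y"
  proof
    fix q assume "q \<in> cfpo_path a b"
    then have "q \<in> D" using \<open>Q \<subseteq> D\<close> unfolding Q_def by auto
    then show "\<exists>x\<in>X. \<exists>y\<in>X. comparable x y \<and> q \<in> seg x y" unfolding D_def by blast
  qed
  show ?thesis
    apply (rule exI[of _ X])
    using X XQ cov unfolding Q_def by simp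
qed

lemma extremal_finite: "finite {u. extremal (cfpo_path a b) (u::'a)}"
proof -
  obtain X where X: "finite X" "X \<subseteq> cfpo_path a b"
    "\<forall>q\<in>cfpo_path a b. \<exists>x\<in>X. \<exists>y\<in>X. comparable x y \<and> q \<in> seg x y"
    using path_rep[of a b] by blast
  have "{u. extremal (cfpo_path a b) u} \<subseteq> X"
  proof
    fix u assume "u \<in> {u. extremal (cfpo_path a b) u}"
    then have u: "u \<in> cfpo_path a b" "(\<forall>w\<in>cfpo_path a b. \<not> u < w) \<or> (\<forall>w\<in>cfpo_path a b. \<not> w < u)"
      unfolding extremal_def by auto
    obtain x y where xy: "x \<in> X" "y \<in> X" "comparable x y" "u \<in> seg x y" using X(3) u(1) by blast
    have "x \<in> cfpo_path a b" "y \<in> cfpo_path a b" using xy X(2) by auto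
    have c: "(x \<le> u \<and> u \<le> y) \<or> (y \<le> u \<and> u \<le> x)" using xy(4) unfolding seg_def by auto
    show "u \<in> X" using u(2)
    proof
      assume mx: "\<forall>w\<in>cfpo_path a b. \<not> u < w"
      then have "\<not> u < x" "\<not> u < y" using \<open>x \<in> cfpo_path a b\<close> \<open>y \<in> cfpo_path a b\<close> by auto
      then have "u = x \<or> u = y" using c by (auto simp: le_less)
      then show ?thesis using xy by auto
    next
      assume mx: "\<forall>w\<in>cfpo_path a b. \<not> w < u"
      then have "\<not> x < u" "\<not> y < u" using \<open>x \<in> cfpo_path a b\<close> \<open>y \<in> cfpo_path a b\<close> by auto
      then have "u = x \<or> u = y" using c by (auto simp: le_less)
      then show ?thesis using xy by auto
    qed
  qed
  then show ?thesis using X(1) finite_subset by blast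
qed

lemma extremal_internal:
  assumes nc: "\<not> comparable a (b::'a)"
  shows "\<exists>u. extremal (cfpo_path a b) u \<and> u \<noteq> a \<and> u \<noteq> b"
proof (rule ccontr)
  assume H: "\<not> ?thesis"
  obtain X where X: "finite X" "X \<subseteq> cfpo_path a b" "a \<in> X" "b \<in> X"
    "\<forall>x\<in>X. (\<lambda>u v. u \<in> X \<and> v \<in> X \<and> stepE (cfpo_path a b) u v)\<^sup>*\<^sup>* a x"
    "\<forall>q\<in>cfpo_path a b. \<exists>x\<in>X. \<exists>y\<in>X. comparable x y \<and> q \<in> seg x y"
    using path_rep[of a b] by blast
  have above: "\<exists>x\<in>X. q \<le> x" if qQ: "q \<in> cfpo_path a b" for q
  proof -
    obtain x y where "x \<in> X" "y \<in> X" "q \<in> seg x y" using X(6) qQ by blast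
    then show ?thesis unfolding seg_def by auto
  qed
  have below: "\<exists>x\<in>X. x \<le> q" if qQ: "q \<in> cfpo_path a b" for q
  proof -
    obtain x y where "x \<in> X" "y \<in> X" "q \<in> seg x y" using X(6) qQ by blast
    then show ?thesis unfolding seg_def by auto
  qed
  have XS: "x \<in> {a, b}" if xX: "x \<in> X" for x
  proof -
    obtain m where m: "m \<in> X" "x \<le> m" "\<forall>c\<in>X. m \<le> c \<longrightarrow> m = c"
      using finite_has_maximal2[OF X(1) xX] by blast
    have "extremal (cfpo_path a b) m"
      unfolding extremal_def
    proof (intro conjI disjI1 ballI)
      show "m \<in> cfpo_path a b" using m X(2) by auto
      fix w assume w: "w \<in> cfpo_path a b"
      show "\<not> m < w"
      proof
        assume mw: "m < w"
        obtain c where "c \<in> X" "w \<le> c" using above[OF w] by auto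
        then show False using m mw by (metis less_le_not_le order_trans)
      qed
    qed
    then have m2: "m = a \<or> m = b" using H by auto
    obtain n where n: "n \<in> X" "n \<le> x" "\<forall>c\<in>X. c \<le> n \<longrightarrow> n = c"
      using finite_has_minimal2[OF X(1) xX] by blast
    have "extremal (cfpo_path a b) n"
      unfolding extremal_def
    proof (intro conjI disjI2 ballI)
      show "n \<in> cfpo_path a b" using n X(2) by auto
      fix w assume w: "w \<in> cfpo_path a b"
      show "\<not> w < n"
      proof
        assume mw: "w < n"
        obtain c where "c \<in> X" "c \<le> w" using below[OF w] by auto
        then show False using n mw by (metis less_le_not_le order_trans)
      qed
    qed
    then have n2: "n = a \<or> n = b" using H by auto
    show ?thesis
    proof (cases "m = a")
      case True
      then show ?thesis using n2 m(2) n(2) nc unfolding comparable_def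
        by (metis insertI1 order_antisym order_trans)
    next
      case False
      then have "m = b" using m2 by auto
      then show ?thesis using n2 m(2) n(2) nc unfolding comparable_def
        by (metis insertI1 insert_commute order_antisym order_trans)
    qed
  qed
  have "v = a" if "(\<lambda>u v. u \<in> X \<and> v \<in> X \<and> stepE (cfpo_path a b) u v)\<^sup>*\<^sup>* a v" for v
    using that
  proof (induction rule: rtranclp_induct)
    case (step u v)
    then have "v \<in> {a, b}" "comparable a v" using XS unfolding stepE_def by auto
    then show ?case using nc by (auto simp: comparable_def)
  qed auto
  then have "b = a" using X(4,5) by auto
  then show False using nc by (auto simp: comparable_def)
qed


lemma leaf:
  assumes fin: "finite V" and aV: "a \<in> V" and bV: "b0 \<in> V" and ab: "a \<noteq> b0"
  shows "\<exists>v\<in>V. \<forall>c\<in>V. \<forall>e\<in>V. c \<noteq> v \<longrightarrow> e \<noteq> v \<longrightarrow> v \<notin> cfpo_path c (e::'a)"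
proof -
  define F where "F = (\<lambda>v. cfpo_path a v) ` (V - {a})"
  have "finite F" "F \<noteq> {}" using fin bV ab unfolding F_def by auto
  then obtain M where M: "M \<in> F" "\<forall>B\<in>F. M \<subseteq> B \<longrightarrow> M = B" using finite_has_maximal by blast
  then obtain b where b: "b \<in> V" "b \<noteq> a" "M = cfpo_path a b" unfolding F_def by auto
  have "\<forall>c\<in>V. \<forall>e\<in>V. c \<noteq> b \<longrightarrow> e \<noteq> b \<longrightarrow> b \<notin> cfpo_path c e"
  proof (intro ballI impI notI)
    fix c e assume cV: "c \<in> V" and eV: "e \<in> V" and cb: "c \<noteq> b" and eb: "e \<noteq> b"
      and bce: "b \<in> cfpo_path c e"
    have "\<exists>c'\<in>{c, e}. b \<in> cfpo_path a c'"
    proof (rule ccontr)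
      assume "\<not> ?thesis"
      then have "b \<notin> cfpo_path c a" "b \<notin> cfpo_path a e" using path_sym by auto
      then show False using path_tri[of c e a] bce by auto
    qed
    then obtain c' where c': "c' \<in> V" "c' \<noteq> b" "b \<in> cfpo_path a c'" using cV eV cb eb by auto
    have "c' \<noteq> a" using c' b path_self by (metis singletonD)
    then have F': "cfpo_path a c' \<in> F" using c' unfolding F_def by auto
    have "cfpo_path a b \<subseteq> cfpo_path a c'" using convex[OF path_mem1 c'(3)] by simp
    then have "cfpo_path a b = cfpo_path a c'" using M(2) F' b by auto
    then have "c' \<in> cfpo_path a b" using path_mem2 by auto
    then show False using mutual[OF c'(3)] c' by auto
  qed
  then show ?thesis using b by auto
qed

lemma side: "x \<in> cfpo_path s1 t1 \<Longrightarrow> u \<noteq> x \<Longrightarrow> u \<notin> cfpo_path x s1 \<or> u \<notin> cfpo_path x (t1::'a)"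
proof (rule ccontr)
  assume x: "x \<in> cfpo_path s1 t1" and ux: "u \<noteq> x" and H: "\<not> (u \<notin> cfpo_path x s1 \<or> u \<notin> cfpo_path x t1)"
  then have h1: "u \<in> cfpo_path s1 x" "u \<in> cfpo_path t1 x" using path_sym by auto
  have "x \<notin> cfpo_path s1 u" using mutual[of x s1 u] h1 ux by auto
  moreover have "x \<notin> cfpo_path u t1" using mutual[of x t1 u] h1 ux path_sym by metis
  ultimately show False using path_tri[of s1 t1 u] x by auto
qed

lemma cone_trans: "u \<notin> cfpo_path p q \<Longrightarrow> u \<notin> cfpo_path q r \<Longrightarrow> u \<notin> cfpo_path p (r::'a)"
  using path_tri[of p r q] by auto

lemma keyK:
  assumes ux: "u \<noteq> x" and us: "u \<notin> cfpo_path x s" and w: "w \<in> cfpo_path x (s::'a)"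
    and mx: "\<forall>z\<in>cfpo_path x u. \<not> u < z"
  shows "\<not> u < w"
proof
  assume uw: "u < w"
  obtain z where z: "z \<in> cfpo_path x u" "z \<noteq> u" "comparable z u"
    and ic: "interval_connected (cfpo_path x u - {u})" using endpoint[of x u] ux by auto
  have "cfpo_path x z \<subseteq> cfpo_path x u - {u}"
    by (rule path_least) (use z ux path_mem1 ic in auto)
  then have u1: "u \<notin> cfpo_path z x" using path_sym by auto
  have zu: "z < u" using z mx unfolding comparable_def by (auto simp: le_less)
  have "cfpo_path x w \<subseteq> cfpo_path x s" using convex[OF path_mem1 w] .
  then have u2: "u \<notin> cfpo_path x w" using us by auto
  have "u \<notin> cfpo_path z w" using cone_trans[OF u1 u2] .
  moreover have "u \<in> cfpo_path z w" using path_seg[of z w] zu uw by (auto simp: seg_def)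
  ultimately show False by auto
qed

lemma keyK':
  assumes ux: "u \<noteq> x" and us: "u \<notin> cfpo_path x s" and w: "w \<in> cfpo_path x (s::'a)"
    and mx: "\<forall>z\<in>cfpo_path x u. \<not> z < u"
  shows "\<not> w < u"
proof
  assume uw: "w < u"
  obtain z where z: "z \<in> cfpo_path x u" "z \<noteq> u" "comparable z u"
    and ic: "interval_connected (cfpo_path x u - {u})" using endpoint[of x u] ux by auto
  have "cfpo_path x z \<subseteq> cfpo_path x u - {u}"
    by (rule path_least) (use z ux path_mem1 ic in auto)
  then have u1: "u \<notin> cfpo_path z x" using path_sym by auto
  have zu: "u < z" using z mx unfolding comparable_def by (auto simp: le_less)
  have "cfpo_path x w \<subseteq> cfpo_path x s" using convex[OF path_mem1 w] .
  then have u2: "u \<notin> cfpo_path x w" using us by auto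
  have "u \<notin> cfpo_path z w" using cone_trans[OF u1 u2] .
  moreover have "u \<in> cfpo_path w z" using path_seg[of w z] zu uw by (auto simp: seg_def)
  ultimately show False using path_sym by metis
qed

lemma closure_lemma:
  assumes x: "x \<in> cfpo_path s1 t1" and y: "y \<in> cfpo_path s2 t2"
    and ext: "extremal (cfpo_path x y) u" and ux: "u \<noteq> x" and uy: "u \<noteq> (y::'a)"
  shows "\<exists>s\<in>{s1, t1}. \<exists>t\<in>{s2, t2}. extremal (cfpo_path s t) u"
proof -
  obtain s where s: "s \<in> {s1, t1}" "u \<notin> cfpo_path x s" using side[OF x ux] by auto
  obtain t where t: "t \<in> {s2, t2}" "u \<notin> cfpo_path y t" using side[OF y uy] by auto
  have uxy: "u \<in> cfpo_path x y" using ext unfolding extremal_def by auto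
  have ust: "u \<in> cfpo_path s t"
  proof (rule ccontr)
    assume "u \<notin> cfpo_path s t"
    then have "u \<notin> cfpo_path x t" using cone_trans s(2) by blast
    then have "u \<notin> cfpo_path x y" using cone_trans t(2) path_sym by metis
    then show False using uxy by auto
  qed
  have sub: "cfpo_path s t \<subseteq> cfpo_path x s \<union> cfpo_path x y \<union> cfpo_path y t"
    using path_tri[of s t x] path_tri[of x t y] path_sym[of s x] by auto
  have px: "cfpo_path x u \<subseteq> cfpo_path x y" using convex[OF path_mem1 uxy] .
  have py: "cfpo_path y u \<subseteq> cfpo_path x y" using convex[OF path_mem2 uxy] .
  have "(\<forall>w\<in>cfpo_path s t. \<not> u < w) \<or> (\<forall>w\<in>cfpo_path s t. \<not> w < u)"
    using ext unfolding extremal_def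
  proof (elim conjE disjE)
    assume mx: "\<forall>w\<in>cfpo_path x y. \<not> u < w"
    have "\<not> u < w" if w: "w \<in> cfpo_path s t" for w
    proof -
      have "w \<in> cfpo_path x s \<or> w \<in> cfpo_path x y \<or> w \<in> cfpo_path y t" using sub w by auto
      then show ?thesis
      proof (elim disjE)
        assume "w \<in> cfpo_path x s" then show ?thesis using keyK[OF ux s(2)] mx px by auto
      next
        assume "w \<in> cfpo_path x y" then show ?thesis using mx by auto
      next
        assume "w \<in> cfpo_path y t" then show ?thesis using keyK[OF uy t(2)] mx py by auto
      qed
    qed
    then show ?thesis by auto
  next
    assume mx: "\<forall>w\<in>cfpo_path x y. \<not> w < u"
    have "\<not> w < u" if w: "w \<in> cfpo_path s t" for w
    proof -
      have "w \<in> cfpo_path x s \<or> w \<in> cfpo_path x y \<or> w \<in> cfpo_path y t" using sub w by auto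
      then show ?thesis
      proof (elim disjE)
        assume "w \<in> cfpo_path x s" then show ?thesis using keyK'[OF ux s(2)] mx px by auto
      next
        assume "w \<in> cfpo_path x y" then show ?thesis using mx by auto
      next
        assume "w \<in> cfpo_path y t" then show ?thesis using keyK'[OF uy t(2)] mx py by auto
      qed
    qed
    then show ?thesis by auto
  qed
  then show ?thesis using s t ust unfolding extremal_def by auto
qed


lemma chain_fix:
  assumes fin: "finite V" and ch: "\<forall>a\<in>V. \<forall>b\<in>V. comparable a b" and f: "automorphism f"
    and fV: "f ` V \<subseteq> V" and v: "v \<in> V"
  shows "f v = v"
proof -
  have B: "{w \<in> V. w < f w} = {}"
  proof (rule ccontr)
    assume ne: "{w \<in> V. w < f w} \<noteq> {}"
    obtain m where m: "m \<in> {w \<in> V. w < f w}" "\<forall>c\<in>{w \<in> V. w < f w}. m \<le> c \<longrightarrow> m = c"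
      using finite_has_maximal[OF _ ne] fin by auto
    have "f m \<in> {w \<in> V. w < f w}" using m(1) fV aut_less[OF f] by auto
    then have "m = f m" using m by auto
    then show False using m(1) by auto
  qed
  have B': "{w \<in> V. f w < w} = {}"
  proof (rule ccontr)
    assume ne: "{w \<in> V. f w < w} \<noteq> {}"
    obtain m where m: "m \<in> {w \<in> V. f w < w}" "\<forall>c\<in>{w \<in> V. f w < w}. c \<le> m \<longrightarrow> m = c"
      using finite_has_minimal[OF _ ne] fin by auto
    have "f m \<in> {w \<in> V. f w < w}" using m(1) fV aut_less[OF f] by auto
    then have "m = f m" using m by auto
    then show False using m(1) by auto
  qed
  have "f v \<in> V" using fV v by auto
  then have "comparable v (f v)" using ch v by auto
  then show ?thesis using B B' v unfolding comparable_def by (auto simp: le_less)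
qed


lemma extremal_aut: assumes f: "automorphism f" and e: "extremal (cfpo_path a b) u"
  shows "extremal (cfpo_path (f a) (f b)) (f (u::'a))"
proof -
  have im: "cfpo_path (f a) (f b) = f ` cfpo_path a b" using path_image[OF f] by simp
  show ?thesis using e unfolding extremal_def im using aut_less[OF f] by auto
qed

definition TC :: "'a set \<Rightarrow> bool" where
  "TC V \<longleftrightarrow> (\<forall>a\<in>V. \<forall>b\<in>V. \<not> comparable a b \<longrightarrow> (\<exists>u\<in>V. u \<in> cfpo_path a b \<and> u \<noteq> a \<and> u \<noteq> b))"

lemma fixpt:
  assumes "finite V" "V \<noteq> {}" "\<forall>f\<in>G. automorphism f \<and> f ` V \<subseteq> V" "TC V"
  shows "\<exists>x. \<forall>f\<in>G. f x = x"
  using assms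
proof (induction "card V" arbitrary: V rule: less_induct)
  case less
  define V' where "V' = {v \<in> V. \<exists>a\<in>V. \<exists>b\<in>V. a \<noteq> v \<and> b \<noteq> v \<and> v \<in> cfpo_path a b}"
  show ?case
  proof (cases "V' = {}")
    case True
    have ch: "\<forall>a\<in>V. \<forall>b\<in>V. comparable a b"
    proof (intro ballI)
      fix a b assume ab: "a \<in> V" "b \<in> V"
      show "comparable a b"
      proof (rule ccontr)
        assume "\<not> comparable a b"
        then obtain u where "u \<in> V" "u \<in> cfpo_path a b" "u \<noteq> a" "u \<noteq> b"
          using less.prems(4) ab unfolding TC_def by blast
        then have "u \<in> V'" using ab unfolding V'_def by force
        then show False using True by auto
      qed
    qed
    obtain v where v: "v \<in> V" using less.prems(2) by auto
    have "f v = v" if fG: "f \<in> G" for f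
      using chain_fix[OF less.prems(1) ch _ _ v] less.prems(3) fG by auto
    then show ?thesis by auto
  next
    case False
    then obtain v a b where v: "v \<in> V" "a \<in> V" "b \<in> V" "a \<noteq> v" "b \<noteq> v" "v \<in> cfpo_path a b"
      unfolding V'_def by blast
    obtain l where l: "l \<in> V" "\<forall>c\<in>V. \<forall>e\<in>V. c \<noteq> l \<longrightarrow> e \<noteq> l \<longrightarrow> l \<notin> cfpo_path c e"
      using leaf[OF less.prems(1) v(2) v(1) v(4)] by blast
    have "l \<notin> V'" using l unfolding V'_def by blast
    then have "V' \<subset> V" using l(1) unfolding V'_def by blast
    then have card: "card V' < card V" by (rule psubset_card_mono[OF less.prems(1)])
    have fin: "finite V'" using less.prems(1) unfolding V'_def by auto
    have inv: "\<forall>f\<in>G. automorphism f \<and> f ` V' \<subseteq> V'"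
    proof (intro ballI conjI)
      fix f assume fG: "f \<in> G"
      then have f: "automorphism f" and fV: "f ` V \<subseteq> V" using less.prems(3) by auto
      then show "automorphism f" by simp
      show "f ` V' \<subseteq> V'"
      proof
        fix z assume "z \<in> f ` V'"
        then obtain w a b where w: "z = f w" "w \<in> V" "a \<in> V" "b \<in> V" "a \<noteq> w" "b \<noteq> w" "w \<in> cfpo_path a b"
          unfolding V'_def by blast
        have "f w \<in> cfpo_path (f a) (f b)" using path_mem_aut[OF f] w by simp
        moreover have "f a \<noteq> f w" "f b \<noteq> f w" using aut_inj[OF f] w by auto
        ultimately show "z \<in> V'" using fV w unfolding V'_def by blast
      qed
    qed
    have tc: "TC V'"
      unfolding TC_def
    proof (intro ballI impI)
      fix a b assume ab: "a \<in> V'" "b \<in> V'" and nc: "\<not> comparable a b"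
      then have abV: "a \<in> V" "b \<in> V" unfolding V'_def by auto
      then obtain u where u: "u \<in> V" "u \<in> cfpo_path a b" "u \<noteq> a" "u \<noteq> b"
        using less.prems(4) nc unfolding TC_def by blast
      then have "u \<in> V'" using abV unfolding V'_def by force
      then show "\<exists>u\<in>V'. u \<in> cfpo_path a b \<and> u \<noteq> a \<and> u \<noteq> b" using u by blast
    qed
    show ?thesis using less.hyps[OF card fin False inv tc] .
  qed
qed

end

theorem mainTheorem2:
  fixes a :: "nat \<Rightarrow> nat \<Rightarrow> nat" and g :: "nat \<Rightarrow> 'a::order \<Rightarrow> 'a"
  assumes "K_Cone TYPE('a)"
    and "bij_betw a {..<60} A5"
    and "\<forall>i<60. automorphism (g i)"
    and "A5_formula a g"
  shows "\<exists>x. \<forall>i<60. g i x = x"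
proof -
  have pcc: "\<And>s t::'a. interval_connected (cfpo_path s t)"
    using assms(1) unfolding K_Cone_def path_complete_cfpo_def by auto
  interpret cfpo "TYPE('a)" by unfold_locales (rule pcc)
  have clos: "\<exists>k<60. g i \<circ> g j = g k" if ij: "i < 60" "j < 60" for i j
  proof -
    have ai: "a i \<in> A5" "a j \<in> A5" using assms(2) ij bij_betw_apply by fastforce+
    then have pi: "a i permutes {..<5}" "a j permutes {..<5}" "evenperm (a i)" "evenperm (a j)"
      unfolding A5_def by auto
    have "permutation (a i)" "permutation (a j)" using pi permutation_permutes by blast+
    then have "evenperm (a i \<circ> a j)" using evenperm_comp pi by blast
    moreover have "a i \<circ> a j permutes {..<5}" using permutes_compose pi by blast
    ultimately have "a i \<circ> a j \<in> A5" unfolding A5_def by auto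
    then obtain k where k: "k < 60" "a k = a i \<circ> a j"
      using assms(2) unfolding bij_betw_def by (metis imageE lessThan_iff)
    then have "g i \<circ> g j = g k" using assms(4) ij unfolding A5_formula_def by auto
    then show ?thesis using k by auto
  qed
  define x0 :: 'a where "x0 = undefined"
  define Orb where "Orb = (\<lambda>i. g i x0) ` {..<60}"
  define V where "V = {u. \<exists>p\<in>Orb. \<exists>q\<in>Orb. extremal (cfpo_path p q) u}"
  define G where "G = g ` {..<60}"
  have Oinv: "g i p \<in> Orb" if ip: "i < 60" "p \<in> Orb" for i p
  proof -
    obtain j where j: "j < 60" "p = g j x0" using ip(2) unfolding Orb_def by auto
    obtain k where "k < 60" "g i \<circ> g j = g k" using clos[OF ip(1) j(1)] by auto
    then have "g i p = g k x0" using j by (metis comp_apply)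
    then show ?thesis using \<open>k < 60\<close> unfolding Orb_def by auto
  qed
  have "V = (\<Union>p\<in>Orb. \<Union>q\<in>Orb. {u. extremal (cfpo_path p q) u})" unfolding V_def by auto
  then have finV: "finite V" unfolding Orb_def using extremal_finite by auto
  have "extremal (cfpo_path (g 0 x0) (g 0 x0)) (g 0 x0)" unfolding extremal_def path_self by auto
  moreover have "g 0 x0 \<in> Orb" unfolding Orb_def by auto
  ultimately have "g 0 x0 \<in> V" unfolding V_def by blast
  then have neV: "V \<noteq> {}" by auto
  have inv: "\<forall>f\<in>G. automorphism f \<and> f ` V \<subseteq> V"
  proof
    fix f assume "f \<in> G"
    then obtain i where i: "i < 60" "f = g i" unfolding G_def by auto
    then have f: "automorphism f" using assms(3) by auto
    have "f ` V \<subseteq> V"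
    proof
      fix z assume "z \<in> f ` V"
      then obtain u p q where "z = f u" "p \<in> Orb" "q \<in> Orb" "extremal (cfpo_path p q) u" unfolding V_def by auto
      then show "z \<in> V" using extremal_aut[OF f] Oinv i unfolding V_def by blast
    qed
    then show "automorphism f \<and> f ` V \<subseteq> V" using f by auto
  qed
  have tc: "TC V"
    unfolding TC_def
  proof (intro ballI impI)
    fix x y assume xV: "x \<in> V" and yV: "y \<in> V" and nc: "\<not> comparable x y"
    obtain s1 t1 where s1: "s1 \<in> Orb" "t1 \<in> Orb" "x \<in> cfpo_path s1 t1" using xV unfolding V_def extremal_def by auto
    obtain s2 t2 where s2: "s2 \<in> Orb" "t2 \<in> Orb" "y \<in> cfpo_path s2 t2" using yV unfolding V_def extremal_def by auto
    obtain u where u: "extremal (cfpo_path x y) u" "u \<noteq> x" "u \<noteq> y" using extremal_internal[OF nc] by auto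
    obtain s t where "s \<in> {s1, t1}" "t \<in> {s2, t2}" "extremal (cfpo_path s t) u"
      using closure_lemma[OF s1(3) s2(3) u] by auto
    then have "u \<in> V" using s1 s2 unfolding V_def by auto
    then show "\<exists>u\<in>V. u \<in> cfpo_path x y \<and> u \<noteq> x \<and> u \<noteq> y" using u unfolding extremal_def by auto
  qed
  obtain x where "\<forall>f\<in>G. f x = x" using fixpt[OF finV neV inv tc] by auto
  then show ?thesis unfolding G_def by auto
qed

end
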